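(* Let $(G_1^p,G_2^p)$ be a pair of twin polymer graphs. Then the Weisfeiler–Lehman (WL) test cannot distinguish $G_1^p$ and $G_2^p$: at every iteration of WL color refinement, the multiset of colors of the nodes in one period of $G_1^p$ equals the multiset of colors of the nodes in one period of $G_2^p$.
   Context: A monomer graph is $G=(V,E,\mathbf{X})$ with atoms $V=\{v_0,\dots,v_{n-1}\}$, bonds $E$, atom features $\mathbf{x}_i$, and boundary atoms $v_0,v_{n-1}$. Its polymer graph $G^p$ has nodes $v^p_i$, $i\in\mathbb{Z}$, with $v^p_i$ carrying the features of $v_{i\bmod n}$, and edges $(v^p_{kn+a},v^p_{kn+b})$ for all $k\in\mathbb{Z}$ and $(v_a,v_b)\in E$, plus $(v^p_{kn-1},v^p_{kn})$ for all $k\in\mathbb{Z}$. Its induced star-linking graph $G^*$ has node set $V$, edge set $E\cup\{(v_0,v_{n-1})\}$ and the same features. Two polymers with monomer graphs $G_1,G_2$ and polymer graphs $G_1^p\ne G_2^p$ (non-isomorphic) form a pair of twin polymer graphs if their induced star-linking graphs coincide, $G_1^*=G_2^*$ (i.e. are isomorphic as node-attributed graphs). The WL test initializes node colors by node features and iteratively recolors each node by (a hash of) its current color together with the multiset of its neighbors' colors; colors on a polymer graph are periodic, and one period of $G^p$ is the node set $\{v^p_0,\dots,v^p_{n-1}\}$. *)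

theory Defs
  imports Main "HOL-Library.Multiset"
begin

text \<open>A monomer graph is given by its number of atoms n (atoms are 0..<n, atom 0 and
  atom n-1 are the boundary atoms), a set of bonds E (unordered; a pair (a,b) in E
  stands for the undirected bond between a and b) and atom features X.\<close>

definition monomer_wf :: "nat \<Rightarrow> (nat \<times> nat) set \<Rightarrow> bool" where
  "monomer_wf n E \<longleftrightarrow> 2 \<le> n \<and> E \<subseteq> {0..<n} \<times> {0..<n} \<and> (\<forall>a. (a, a) \<notin> E)
     \<and> (0, n - 1) \<notin> E \<and> (n - 1, 0) \<notin> E"

definition poly_adj :: "nat \<Rightarrow> (nat \<times> nat) set \<Rightarrow> int \<Rightarrow> int \<Rightarrow> bool" where
  "poly_adj n E i j \<longleftrightarrow>
     (\<exists>k a b. ((a, b) \<in> E \<or> (b, a) \<in> E) \<and> i = k * int n + int a \<and> j = k * int n + int b)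
   \<or> (\<exists>k. (i = k * int n - 1 \<and> j = k * int n) \<or> (i = k * int n \<and> j = k * int n - 1))"

definition poly_feat :: "nat \<Rightarrow> (nat \<Rightarrow> 'c) \<Rightarrow> int \<Rightarrow> 'c" where
  "poly_feat n X i = X (nat (i mod int n))"

definition star_adj :: "nat \<Rightarrow> (nat \<times> nat) set \<Rightarrow> nat \<Rightarrow> nat \<Rightarrow> bool" where
  "star_adj n E a b \<longleftrightarrow> a < n \<and> b < n \<and>
     ((a, b) \<in> E \<or> (b, a) \<in> E \<or> (a = 0 \<and> b = n - 1) \<or> (a = n - 1 \<and> b = 0))"

definition star_iso :: "nat \<Rightarrow> (nat \<times> nat) set \<Rightarrow> (nat \<Rightarrow> 'c) \<Rightarrow>
                        nat \<Rightarrow> (nat \<times> nat) set \<Rightarrow> (nat \<Rightarrow> 'c) \<Rightarrow> bool" where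
  "star_iso n1 E1 X1 n2 E2 X2 \<longleftrightarrow>
     (\<exists>f. bij_betw f {0..<n1} {0..<n2} \<and> (\<forall>a<n1. X2 (f a) = X1 a) \<and>
          (\<forall>a<n1. \<forall>b<n1. star_adj n2 E2 (f a) (f b) \<longleftrightarrow> star_adj n1 E1 a b))"

definition poly_iso :: "nat \<Rightarrow> (nat \<times> nat) set \<Rightarrow> (nat \<Rightarrow> 'c) \<Rightarrow>
                        nat \<Rightarrow> (nat \<times> nat) set \<Rightarrow> (nat \<Rightarrow> 'c) \<Rightarrow> bool" where
  "poly_iso n1 E1 X1 n2 E2 X2 \<longleftrightarrow>
     (\<exists>f :: int \<Rightarrow> int. bij f \<and> (\<forall>i. poly_feat n2 X2 (f i) = poly_feat n1 X1 i) \<and>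
          (\<forall>i j. poly_adj n2 E2 (f i) (f j) \<longleftrightarrow> poly_adj n1 E1 i j))"

definition twin_polymers :: "nat \<Rightarrow> (nat \<times> nat) set \<Rightarrow> (nat \<Rightarrow> 'c) \<Rightarrow>
                        nat \<Rightarrow> (nat \<times> nat) set \<Rightarrow> (nat \<Rightarrow> 'c) \<Rightarrow> bool" where
  "twin_polymers n1 E1 X1 n2 E2 X2 \<longleftrightarrow>
     \<not> poly_iso n1 E1 X1 n2 E2 X2 \<and> star_iso n1 E1 X1 n2 E2 X2"

fun wl :: "('c \<Rightarrow> 'c multiset \<Rightarrow> 'c) \<Rightarrow> ('v \<Rightarrow> 'v \<Rightarrow> bool) \<Rightarrow> ('v \<Rightarrow> 'c) \<Rightarrow> nat \<Rightarrow> 'v \<Rightarrow> 'c" where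
  "wl h adj x 0 v = x v"
| "wl h adj x (Suc t) v = h (wl h adj x t v) (image_mset (wl h adj x t) (mset_set {u. adj v u}))"

end

theory Submission
  imports Defs
begin

lemma dm:
  assumes "a < n"
  shows "(k * int n + int a) div int n = k" "(k * int n + int a) mod int n = int a"
  using assms by (simp_all add: add.commute div_pos_pos_trivial)

lemma dm_uniq:
  assumes "a < n" "a' < n" "k * int n + int a = k' * int n + int a'"
  shows "k = k'" "a = a'"
  using dm[OF assms(1), of k] dm[OF assms(2), of k'] assms(3) by auto

definition lift :: "nat \<Rightarrow> int \<Rightarrow> nat \<Rightarrow> nat \<Rightarrow> int" where
  "lift n k a b = (if a = 0 \<and> b = n-1 then k * int n + int a - 1 else if a = n-1 \<and> b = 0
          then k * int n + int a + 1 else k * int n + int b)"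

lemma nbr:
  assumes wf: "monomer_wf n E" and an: "a < n"
  shows "{u. poly_adj n E (k * int n + int a) u} =
     lift n k a ` {b. star_adj n E a b}"
    (is "?L = ?f ` ?S")
  and "\<forall>b \<in> {b. star_adj n E a b}. nat ((lift n k a b) mod int n) = b"
proof -
  let ?f = "lift n k a"
  have n2: "2 \<le> n" and Esub: "E \<subseteq> {0..<n} \<times> {0..<n}" and e1: "(0, n - 1) \<notin> E"
    and e2: "(n - 1, 0) \<notin> E"
    using wf unfolding monomer_wf_def by auto
  have km1: "k * int n - 1 = (k - 1) * int n + int (n - 1)" for k
    using n2 by (simp add: algebra_simps of_nat_diff)
  show "?L = ?f ` ?S"
  proof
    show "?L \<subseteq> ?f ` ?S"
    proof
      fix u assume "u \<in> ?L"
      then have pa: "poly_adj n E (k * int n + int a) u" by simp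
      then consider (E) k' a' b where "(a', b) \<in> E \<or> (b, a') \<in> E"
          "k * int n + int a = k' * int n + int a'" "u = k' * int n + int b"
        | (L1) k' where "k * int n + int a = k' * int n - 1" "u = k' * int n"
        | (L2) k' where "k * int n + int a = k' * int n" "u = k' * int n - 1"
        unfolding poly_adj_def by blast
      then show "u \<in> ?f ` ?S"
      proof cases
        case E
        then have a'n: "a' < n" "b < n" using Esub by auto
        with E dm_uniq[OF an a'n(1)] have "k = k'" "a = a'" by auto
        moreover have "star_adj n E a b" using E a'n an \<open>a = a'\<close> unfolding star_adj_def by auto
        moreover have "?f b = k * int n + int b"
          using E e1 e2 \<open>a = a'\<close> unfolding lift_def by auto
        ultimately show ?thesis using E by (intro image_eqI[where x=b]) auto
      next
        case L1
        have "n - 1 < n" using n2 by simp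
        from dm_uniq[OF an this] L1 km1 have "k = k' - 1" "a = n - 1" by auto
        moreover have "star_adj n E (n-1) 0" using n2 unfolding star_adj_def by auto
        moreover have "?f 0 = k * int n + int a + 1" using n2 \<open>a = n - 1\<close> unfolding lift_def by auto
        moreover have "u = k * int n + int a + 1" using L1 by simp
        ultimately show ?thesis by (intro image_eqI[where x=0]) auto
      next
        case L2
        have "0 < n" using n2 by simp
        from dm_uniq[OF an this] L2 have "k = k'" "a = 0" by auto
        moreover have "star_adj n E 0 (n-1)" using n2 unfolding star_adj_def by auto
        moreover have "?f (n-1) = k * int n + int a - 1" using n2 \<open>a = 0\<close> unfolding lift_def by auto
        moreover have "u = k * int n + int a - 1" using L2 by simp
        ultimately show ?thesis by (intro image_eqI[where x="n-1"]) auto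
      qed
    qed
  next
    show "?f ` ?S \<subseteq> ?L"
    proof
      fix u assume "u \<in> ?f ` ?S"
      then obtain b where b: "star_adj n E a b" "u = ?f b" by auto
      show "u \<in> ?L"
      proof (cases "a = 0 \<and> b = n-1")
        case True
        then have "u = k * int n - 1" "k * int n + int a = k * int n" using b unfolding lift_def by auto
        then show ?thesis unfolding poly_adj_def by blast
      next
        case F1: False
        show ?thesis
        proof (cases "a = n-1 \<and> b = 0")
          case True
          then have "u = (k+1) * int n" "k * int n + int a = (k+1) * int n - 1"
            using b F1 n2 by (auto simp: lift_def algebra_simps of_nat_diff)
          then show ?thesis unfolding poly_adj_def by blast
        next
          case False
          then have "(a, b) \<in> E \<or> (b, a) \<in> E" "u = k * int n + int b"
            using b F1 unfolding star_adj_def lift_def by auto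
          then show ?thesis unfolding poly_adj_def by blast
        qed
      qed
    qed
  qed
  show "\<forall>b \<in> ?S. nat ((?f b) mod int n) = b"
  proof
    fix b assume "b \<in> ?S"
    then have bn: "b < n" unfolding star_adj_def by auto
    have "n - 1 < n" "0 < n" using n2 by auto
    note d = dm(2)[OF this(1), of "k - 1"] dm(2)[OF this(2), of "k+1"] dm(2)[OF bn, of k]
    have e1: "k * int n + int 0 - 1 = (k - 1) * int n + int (n - 1)" using km1[of k] by simp
    have e2: "k * int n + int (n-1) + 1 = (k + 1) * int n + int 0" using n2 by (simp add: algebra_simps of_nat_diff)
    show "nat ((?f b) mod int n) = b"
    proof (cases "a = 0 \<and> b = n-1")
      case True then show ?thesis using d(1) e1 by (simp add: lift_def)
    next
      case F: False
      show ?thesis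
      proof (cases "a = n-1 \<and> b = 0")
        case True then show ?thesis using d(2) e2 F by (simp add: lift_def)
      next
        case False
        have "lift n k a b = k * int n + int b" by (simp only: lift_def F False if_False)
        then show ?thesis using d(3) by simp
      qed
    qed
  qed
qed

lemma wl_poly:
  assumes wf: "monomer_wf n E"
  shows "wl h (poly_adj n E) (poly_feat n X) t i = wl h (star_adj n E) X t (nat (i mod int n))"
proof (induction t arbitrary: i)
  case 0
  then show ?case by (simp add: poly_feat_def)
next
  case (Suc t)
  have n0: "0 < n" using wf unfolding monomer_wf_def by auto
  define k where "k = i div int n"
  define a where "a = nat (i mod int n)"
  have an: "a < n" using n0 unfolding a_def by (simp add: nat_less_iff)
  have ik: "i = k * int n + int a" using n0 unfolding k_def a_def by simp
  define S where "S = {b. star_adj n E a b}"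
  have finS: "finite S" unfolding S_def star_adj_def by (rule finite_subset[of _ "{..<n}"]) auto
  have N: "{u. poly_adj n E i u} = lift n k a ` S" using nbr(1)[OF wf an, of k] ik S_def by simp
  have inv: "\<And>b. b \<in> S \<Longrightarrow> nat (lift n k a b mod int n) = b" using nbr(2)[OF wf an, of k] S_def by simp
  have inj: "inj_on (lift n k a) S" by (metis inv inj_onI)
  have "image_mset (wl h (poly_adj n E) (poly_feat n X) t) (mset_set {u. poly_adj n E i u})
      = image_mset (wl h (poly_adj n E) (poly_feat n X) t) (image_mset (lift n k a) (mset_set S))"
    unfolding N using image_mset_mset_set[OF inj] by simp
  also have "\<dots> = image_mset (\<lambda>b. wl h (poly_adj n E) (poly_feat n X) t (lift n k a b)) (mset_set S)"
    by (simp add: image_mset.compositionality comp_def)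
  also have "\<dots> = image_mset (wl h (star_adj n E) X t) (mset_set S)"
    by (rule image_mset_cong) (simp add: Suc inv finS)
  finally show ?case using Suc a_def S_def by simp
qed

lemma wl_star:
  assumes bij: "bij_betw f {0..<n1} {0..<n2}" and ad: "\<forall>a<n1. \<forall>b<n1. star_adj n2 E2 (f a) (f b) \<longleftrightarrow> star_adj n1 E1 a b"
    and ft: "\<forall>a<n1. X2 (f a) = X1 a" and an: "a < n1"
  shows "wl h (star_adj n2 E2) X2 t (f a) = wl h (star_adj n1 E1) X1 t a"
  using an
proof (induction t arbitrary: a)
  case 0
  then show ?case using ft by simp
next
  case (Suc t)
  define S where "S = {b. star_adj n1 E1 a b}"
  have Ssub: "S \<subseteq> {0..<n1}" unfolding S_def star_adj_def by auto
  have N: "{u. star_adj n2 E2 (f a) u} = f ` S"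
  proof
    show "{u. star_adj n2 E2 (f a) u} \<subseteq> f ` S"
    proof
      fix u assume "u \<in> {u. star_adj n2 E2 (f a) u}"
      then have u: "star_adj n2 E2 (f a) u" "u < n2" unfolding star_adj_def by auto
      then obtain b where "b < n1" "u = f b" using bij unfolding bij_betw_def by (metis atLeastLessThan_iff imageE zero_le)
      then show "u \<in> f ` S" using u ad Suc.prems unfolding S_def by auto
    qed
  next
    show "f ` S \<subseteq> {u. star_adj n2 E2 (f a) u}"
      using Ssub ad Suc.prems unfolding S_def by auto
  qed
  have inj: "inj_on f S" using bij Ssub unfolding bij_betw_def by (metis inj_on_subset)
  have finS: "finite S" using Ssub finite_subset by blast
  have "image_mset (wl h (star_adj n2 E2) X2 t) (mset_set {u. star_adj n2 E2 (f a) u})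
     = image_mset (wl h (star_adj n2 E2) X2 t) (image_mset f (mset_set S))"
    unfolding N using image_mset_mset_set[OF inj] by simp
  also have "\<dots> = image_mset (\<lambda>b. wl h (star_adj n2 E2) X2 t (f b)) (mset_set S)"
    by (simp add: image_mset.compositionality comp_def)
  also have "\<dots> = image_mset (wl h (star_adj n1 E1) X1 t) (mset_set S)"
    by (rule image_mset_cong) (use Ssub finS Suc.IH in auto)
  finally show ?case using Suc S_def by simp
qed

lemma period:
  assumes wf: "monomer_wf n E"
  shows "image_mset (wl h (poly_adj n E) (poly_feat n X) t) (mset_set {0..<int n})
       = image_mset (wl h (star_adj n E) X t) (mset_set {0..<n})"
proof -
  have e: "{0..<int n} = int ` {0..<n}" by (metis image_int_atLeastLessThan of_nat_0)
  have "image_mset (wl h (poly_adj n E) (poly_feat n X) t) (mset_set {0..<int n})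
      = image_mset (wl h (poly_adj n E) (poly_feat n X) t) (image_mset int (mset_set {0..<n}))"
    unfolding e by (subst image_mset_mset_set) auto
  also have "\<dots> = image_mset (\<lambda>a. wl h (poly_adj n E) (poly_feat n X) t (int a)) (mset_set {0..<n})"
    by (simp add: image_mset.compositionality comp_def)
  also have "\<dots> = image_mset (wl h (star_adj n E) X t) (mset_set {0..<n})"
    by (rule image_mset_cong) (simp add: wl_poly[OF wf])
  finally show ?thesis .
qed

theorem lemma1:
  fixes n1 n2 :: nat and E1 E2 :: "(nat \<times> nat) set" and X1 X2 :: "nat \<Rightarrow> 'c"
    and h :: "'c \<Rightarrow> 'c multiset \<Rightarrow> 'c"
  assumes "monomer_wf n1 E1" and "monomer_wf n2 E2"
    and "twin_polymers n1 E1 X1 n2 E2 X2"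
  shows "\<forall>t. image_mset (wl h (poly_adj n1 E1) (poly_feat n1 X1) t) (mset_set {0..<int n1})
           = image_mset (wl h (poly_adj n2 E2) (poly_feat n2 X2) t) (mset_set {0..<int n2})"
proof
  fix t
  obtain f where bij: "bij_betw f {0..<n1} {0..<n2}" and ft: "\<forall>a<n1. X2 (f a) = X1 a"
    and ad: "\<forall>a<n1. \<forall>b<n1. star_adj n2 E2 (f a) (f b) \<longleftrightarrow> star_adj n1 E1 a b"
    using assms(3) unfolding twin_polymers_def star_iso_def by blast
  have "image_mset (wl h (star_adj n2 E2) X2 t) (mset_set {0..<n2})
      = image_mset (wl h (star_adj n2 E2) X2 t) (image_mset f (mset_set {0..<n1}))"
    using bij unfolding bij_betw_def by (simp add: image_mset_mset_set)
  also have "\<dots> = image_mset (\<lambda>a. wl h (star_adj n2 E2) X2 t (f a)) (mset_set {0..<n1})"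
    by (simp add: image_mset.compositionality comp_def)
  also have "\<dots> = image_mset (wl h (star_adj n1 E1) X1 t) (mset_set {0..<n1})"
    by (rule image_mset_cong) (simp add: wl_star[OF bij ad ft])
  finally have R: "image_mset (wl h (star_adj n2 E2) X2 t) (mset_set {0..<n2}) = image_mset (wl h (star_adj n1 E1) X1 t) (mset_set {0..<n1})" .
  show "image_mset (wl h (poly_adj n1 E1) (poly_feat n1 X1) t) (mset_set {0..<int n1})
           = image_mset (wl h (poly_adj n2 E2) (poly_feat n2 X2) t) (mset_set {0..<int n2})"
    unfolding period[OF assms(1)] period[OF assms(2)] using R by simp
qed

end
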